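(* Let $N$ be a phylogenetic network, $r$ a reticulation with parents $x_L,x_R$ (edges $(x_L,r),(x_R,r)$), and let $(u,v)$ be an edge with $u$ a split node subdividing the edge $(x_L,r)$. If the tail move of $(u,v)$ from $(x_L,r)$ to $(x_R,r)$ is valid, resulting in $N'$, then there is a sequence of at most $4$ valid head moves transforming $N$ into $N'$.
   Context: A (binary) phylogenetic network on a finite label set $X$ ($|X|\ge 2$) is a directed acyclic graph without parallel edges having exactly one root (indegree 0, outdegree 1), exactly $|X|$ leaves (indegree 1, outdegree 0) bijectively labelled by $X$, and all other nodes are either split nodes (indegree 1, outdegree 2) or reticulations (indegree 2, outdegree 1). Subdividing an edge $(a,b)$ means replacing it by a new node $x$ and edges $(a,x),(x,b)$; suppressing an indegree-1 outdegree-1 node $x$ with parent $a$ and child $b$ means deleting $x$ and its edges and adding $(a,b)$. Tail move of $(u,v)$ ($u$ a split node) to edge $f$: delete $(u,v)$, subdivide $f$ with new node $u'$, suppress $u$, add $(u',v)$; "from $(p,q)$ to $f$" means $p$ is the parent and $q$ the other child of $u$. Head move of $(u,v)$ ($v$ a reticulation) to $f$: delete $(u,v)$, subdivide $f$ with new node $v'$, suppress $v$, add $(u,v')$. A move is valid only if the result is a phylogenetic network. *)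

theory Defs
  imports Main
begin

text \<open>A network: a finite set of nodes (natural numbers, so fresh names are always
available), a set of directed edges, and a labelling function (only relevant on leaves).\<close>

record 'x network =
  nodes :: "nat set"
  edges :: "(nat \<times> nat) set"
  lbl   :: "nat \<Rightarrow> 'x"

definition indeg :: "'x network \<Rightarrow> nat \<Rightarrow> nat" where
  "indeg N v = card {u. (u, v) \<in> edges N}"

definition outdeg :: "'x network \<Rightarrow> nat \<Rightarrow> nat" where
  "outdeg N v = card {w. (v, w) \<in> edges N}"

definition is_root :: "'x network \<Rightarrow> nat \<Rightarrow> bool" where
  "is_root N v \<longleftrightarrow> v \<in> nodes N \<and> indeg N v = 0 \<and> outdeg N v = 1"

definition is_leaf :: "'x network \<Rightarrow> nat \<Rightarrow> bool" where
  "is_leaf N v \<longleftrightarrow> v \<in> nodes N \<and> indeg N v = 1 \<and> outdeg N v = 0"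

definition is_split :: "'x network \<Rightarrow> nat \<Rightarrow> bool" where
  "is_split N v \<longleftrightarrow> v \<in> nodes N \<and> indeg N v = 1 \<and> outdeg N v = 2"

definition is_ret :: "'x network \<Rightarrow> nat \<Rightarrow> bool" where
  "is_ret N v \<longleftrightarrow> v \<in> nodes N \<and> indeg N v = 2 \<and> outdeg N v = 1"

definition leaves :: "'x network \<Rightarrow> nat set" where
  "leaves N = {v. is_leaf N v}"

text \<open>Binary phylogenetic network on label set X (edges form a set, so there are no
parallel edges; acyclicity also excludes loops).\<close>
definition phylo_net :: "'x set \<Rightarrow> 'x network \<Rightarrow> bool" where
  "phylo_net X N \<longleftrightarrow>
     finite X \<and> card X \<ge> 2 \<and>
     finite (nodes N) \<and> edges N \<subseteq> nodes N \<times> nodes N \<and> acyclic (edges N) \<and>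
     card {v \<in> nodes N. is_root N v} = 1 \<and>
     (\<forall>v \<in> nodes N. is_root N v \<or> is_leaf N v \<or> is_split N v \<or> is_ret N v) \<and>
     bij_betw (lbl N) (leaves N) X"

definition subdivide :: "(nat \<times> nat) set \<Rightarrow> nat \<times> nat \<Rightarrow> nat \<Rightarrow> (nat \<times> nat) set" where
  "subdivide E f w = (E - {f}) \<union> {(fst f, w), (w, snd f)}"

definition suppress :: "(nat \<times> nat) set \<Rightarrow> nat \<Rightarrow> (nat \<times> nat) set" where
  "suppress E x = {e \<in> E. fst e \<noteq> x \<and> snd e \<noteq> x} \<union> {(a, b). (a, x) \<in> E \<and> (x, b) \<in> E}"

definition tail_move :: "'x set \<Rightarrow> 'x network \<Rightarrow> nat \<times> nat \<Rightarrow> nat \<times> nat \<Rightarrow> nat \<Rightarrow> 'x network \<Rightarrow> bool" where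
  "tail_move X N e f w N' \<longleftrightarrow>
     (let u = fst e; v = snd e; E1 = edges N - {e} in
       e \<in> edges N \<and> is_split N u \<and> f \<in> E1 \<and> w \<notin> nodes N \<and>
       N' = \<lparr> nodes = (nodes N - {u}) \<union> {w},
              edges = suppress (subdivide E1 f w) u \<union> {(w, v)},
              lbl = lbl N \<rparr> \<and>
       phylo_net X N')"

definition head_move :: "'x set \<Rightarrow> 'x network \<Rightarrow> nat \<times> nat \<Rightarrow> nat \<times> nat \<Rightarrow> nat \<Rightarrow> 'x network \<Rightarrow> bool" where
  "head_move X N e f w N' \<longleftrightarrow>
     (let u = fst e; v = snd e; E1 = edges N - {e} in
       e \<in> edges N \<and> is_ret N v \<and> f \<in> E1 \<and> w \<notin> nodes N \<and>
       N' = \<lparr> nodes = (nodes N - {v}) \<union> {w},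
              edges = suppress (subdivide E1 f w) v \<union> {(u, w)},
              lbl = lbl N \<rparr> \<and>
       phylo_net X N')"

definition head_step :: "'x set \<Rightarrow> 'x network \<Rightarrow> 'x network \<Rightarrow> bool" where
  "head_step X N N' \<longleftrightarrow> (\<exists>e f w. head_move X N e f w N')"

definition net_iso :: "'x network \<Rightarrow> 'x network \<Rightarrow> bool" where
  "net_iso N N' \<longleftrightarrow> (\<exists>h. bij_betw h (nodes N) (nodes N') \<and>
      (\<forall>x \<in> nodes N. \<forall>y \<in> nodes N. (x, y) \<in> edges N \<longleftrightarrow> (h x, h y) \<in> edges N') \<and>
      (\<forall>x \<in> leaves N. lbl N' (h x) = lbl N x))"

end

theory Submission
  imports Defs
begin


definition inn :: "(nat \<times> nat) set \<Rightarrow> nat \<Rightarrow> nat set" where "inn E x = {y. (y,x) \<in> E}"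
definition outn :: "(nat \<times> nat) set \<Rightarrow> nat \<Rightarrow> nat set" where "outn E x = {y. (x,y) \<in> E}"
definition swp :: "(nat \<times> nat) set \<Rightarrow> nat \<Rightarrow> nat \<Rightarrow> nat \<Rightarrow> nat \<Rightarrow> (nat \<times> nat) set" where
  "swp E xL xR u r = E - {(xL,u),(xR,r)} \<union> {(xR,u),(xL,r)}"

lemma indeg_inn: "indeg N x = card (inn (edges N) x)" by (simp add: indeg_def inn_def)
lemma outdeg_outn: "outdeg N x = card (outn (edges N) x)" by (simp add: outdeg_def outn_def)

lemma acyc_map:
  assumes H: "acyclic H" and G: "\<And>a b. (a,b) \<in> G \<Longrightarrow> (\<phi> a, \<phi> b) \<in> H\<^sup>+ \<or> (a,b) \<in> K"
    and K: "\<And>a b. (a,b) \<in> K \<Longrightarrow> \<phi> a = \<phi> b" and AK: "acyclic K"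
  shows "acyclic G"
proof -
  have KK: "(x,y) \<in> K\<^sup>+ \<Longrightarrow> \<phi> x = \<phi> y" for x y
    by (induction rule: trancl_induct) (auto dest: K)
  have main: "(x,y) \<in> G\<^sup>+ \<Longrightarrow> (\<phi> x, \<phi> y) \<in> H\<^sup>+ \<or> (x,y) \<in> K\<^sup>+" for x y
  proof (induction rule: trancl_induct)
    case (base y) then show ?case using G by auto
  next
    case (step y z)
    from G[OF step(2)] step(3) show ?case
    proof (elim disjE)
      assume a: "(\<phi> y, \<phi> z) \<in> H\<^sup>+" "(\<phi> x, \<phi> y) \<in> H\<^sup>+" then show ?thesis by auto
    next
      assume a: "(\<phi> y, \<phi> z) \<in> H\<^sup>+" "(x, y) \<in> K\<^sup>+" then show ?thesis using KK by auto
    next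
      assume a: "(y, z) \<in> K" "(\<phi> x, \<phi> y) \<in> H\<^sup>+" then show ?thesis using K by auto
    next
      assume a: "(y, z) \<in> K" "(x, y) \<in> K\<^sup>+" then show ?thesis by (meson trancl.trancl_into_trancl)
    qed
  qed
  show ?thesis unfolding acyclic_def
  proof
    fix x show "(x,x) \<notin> G\<^sup>+"
    proof
      assume "(x,x) \<in> G\<^sup>+"
      from main[OF this] show False using H AK unfolding acyclic_def by auto
    qed
  qed
qed

lemma path_no_in: "(a,b) \<in> E\<^sup>* \<Longrightarrow> (a,b) \<in> {e\<in>E. snd e \<noteq> a}\<^sup>*"
proof (induction rule: rtrancl_induct)
  case base then show ?case by simp
next
  case (step y z) then show ?case
    by (cases "z = a") (auto intro: rtrancl_into_rtrancl)
qed

lemma path_no_out: "(a,b) \<in> E\<^sup>* \<Longrightarrow> (a,b) \<in> {e\<in>E. fst e \<noteq> b}\<^sup>*"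
proof (induction rule: converse_rtrancl_induct)
  case base then show ?case by simp
next
  case (step y z) then show ?case
    by (cases "y = b") (auto intro: converse_rtrancl_into_rtrancl)
qed

lemma card_swap1: "finite A \<Longrightarrow> a \<in> A \<Longrightarrow> b \<notin> A \<Longrightarrow> card (insert b (A - {a})) = card A"
  using card.remove[of A a] by simp

lemma card2_eq: "finite A \<Longrightarrow> card A = 2 \<Longrightarrow> a \<in> A \<Longrightarrow> b \<in> A \<Longrightarrow> a \<noteq> b \<Longrightarrow> A = {a,b}"
  using card_subset_eq[of A "{a,b}"] by simp

lemma card1_eq: "finite A \<Longrightarrow> card A = 1 \<Longrightarrow> a \<in> A \<Longrightarrow> A = {a}"
  by (metis card_1_singletonE singletonD)

lemma transfer:
  assumes P: "phylo_net X N" and B: "bij_betw h (nodes N) (nodes M)"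
    and D: "\<And>x. x \<in> nodes N \<Longrightarrow> indeg M (h x) = indeg N x \<and> outdeg M (h x) = outdeg N x"
    and L: "\<And>x. x \<in> leaves N \<Longrightarrow> lbl M (h x) = lbl N x"
    and S: "edges M \<subseteq> nodes M \<times> nodes M" and A: "acyclic (edges M)"
  shows "phylo_net X M"
proof -
  have hN: "x \<in> nodes N \<Longrightarrow> h x \<in> nodes M" for x using B by (auto simp: bij_betw_def)
  have sur: "y \<in> nodes M \<Longrightarrow> \<exists>x\<in>nodes N. y = h x" for y using B by (auto simp: bij_betw_def)
  have inj: "inj_on h (nodes N)" using B by (auto simp: bij_betw_def)
  have eq: "x \<in> nodes N \<Longrightarrow> (is_root M (h x) = is_root N x) \<and> (is_leaf M (h x) = is_leaf N x)
     \<and> (is_split M (h x) = is_split N x) \<and> (is_ret M (h x) = is_ret N x)" for x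
    using D[of x] hN[of x] by (simp add: is_root_def is_leaf_def is_split_def is_ret_def)
  have R: "{v \<in> nodes M. is_root M v} = h ` {v \<in> nodes N. is_root N v}"
  proof (rule set_eqI, rule iffI)
    fix y assume "y \<in> {v \<in> nodes M. is_root M v}"
    then obtain x where "x \<in> nodes N" "y = h x" "is_root M y" using sur by auto
    then show "y \<in> h ` {v \<in> nodes N. is_root N v}" using eq by auto
  qed (use eq hN in auto)
  have lN: "leaves N \<subseteq> nodes N" by (auto simp: leaves_def is_leaf_def)
  have Lv: "leaves M = h ` leaves N"
  proof (rule set_eqI, rule iffI)
    fix y assume "y \<in> leaves M"
    then have "y \<in> nodes M" "is_leaf M y" by (auto simp: leaves_def is_leaf_def)
    then obtain x where "x \<in> nodes N" "y = h x" "is_leaf M y" using sur by auto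
    then show "y \<in> h ` leaves N" using eq by (auto simp: leaves_def)
  next
    fix y assume "y \<in> h ` leaves N"
    then obtain x where "x \<in> leaves N" "y = h x" by auto
    then show "y \<in> leaves M" using eq lN by (auto simp: leaves_def)
  qed
  have bl: "bij_betw h (leaves N) (leaves M)" using Lv inj lN
    by (simp add: bij_betw_def inj_on_subset)
  have bN: "bij_betw (lbl N) (leaves N) X" using P by (simp add: phylo_net_def)
  have "bij_betw (lbl M \<circ> h) (leaves N) X" using bN L
    by (metis (mono_tags, lifting) bij_betw_cong comp_apply)
  then have bM: "bij_betw (lbl M) (leaves M) X" by (subst bij_betw_comp_iff[OF bl])
  have "card {v \<in> nodes M. is_root M v} = card {v \<in> nodes N. is_root N v}"
    unfolding R by (rule card_image) (rule inj_on_subset[OF inj], auto)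
  moreover have "finite (nodes M)" using B P bij_betw_finite by (auto simp: phylo_net_def)
  moreover have "\<forall>v \<in> nodes M. is_root M v \<or> is_leaf M v \<or> is_split M v \<or> is_ret M v"
    using sur eq P by (auto simp: phylo_net_def)
  ultimately show ?thesis using P S A bM by (auto simp: phylo_net_def)
qed



lemma fin_edges: "phylo_net X N \<Longrightarrow> finite (edges N)"
  unfolding phylo_net_def by (meson finite_SigmaI finite_subset)

lemma fin_inn: "finite E \<Longrightarrow> finite (inn E x)"
proof -
  assume "finite E"
  then have "finite (fst ` E)" by simp
  moreover have "inn E x \<subseteq> fst ` E" by (force simp: inn_def)
  ultimately show ?thesis by (rule finite_subset[rotated])
qed

lemma fin_outn: "finite E \<Longrightarrow> finite (outn E x)"
proof -
  assume "finite E"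
  then have "finite (snd ` E)" by simp
  moreover have "outn E x \<subseteq> snd ` E" by (force simp: outn_def)
  ultimately show ?thesis by (rule finite_subset[rotated])
qed

lemma swap_phylo:
  assumes P: "phylo_net X N" and iu: "inn (edges N) u = {xL}" and e: "(xR,r) \<in> edges N"
    and ne: "(xL,r) \<notin> edges N" "xL \<noteq> xR" "u \<noteq> r"
    and A: "acyclic (swp (edges N) xL xR u r)"
  shows "phylo_net X \<lparr>nodes = nodes N, edges = swp (edges N) xL xR u r, lbl = lbl N\<rparr>"
proof -
  let ?E = "edges N" let ?S = "swp (edges N) xL xR u r"
  let ?M = "\<lparr>nodes = nodes N, edges = swp (edges N) xL xR u r, lbl = lbl N\<rparr>"
  have fin: "finite ?E" using P by (rule fin_edges)
  have sub: "?E \<subseteq> nodes N \<times> nodes N" using P by (simp add: phylo_net_def)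
  have eLu: "(xL,u) \<in> ?E" using iu by (auto simp: inn_def)
  have iu': "(p,u) \<in> ?E \<longleftrightarrow> p = xL" for p using iu by (auto simp: inn_def)
  have S: "(p,q) \<in> ?S \<longleftrightarrow> ((p,q) \<in> ?E \<and> (p,q) \<noteq> (xL,u) \<and> (p,q) \<noteq> (xR,r)) \<or> (p,q) = (xR,u) \<or> (p,q) = (xL,r)" for p q
    by (auto simp: swp_def)
  have D: "indeg ?M x = indeg N x \<and> outdeg ?M x = outdeg N x" for x
  proof
    show "indeg ?M x = indeg N x"
    proof -
      consider "x = u" | "x = r" | "x \<noteq> u" "x \<noteq> r" by blast
      then show ?thesis
      proof cases
        case 1
        have "inn ?S x = {xR}" using 1 ne by (auto simp: inn_def S iu')
        then show ?thesis using 1 iu by (simp add: indeg_inn)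
      next
        case 2
        have "inn ?S x = insert xL (inn ?E x - {xR})" using 2 ne by (auto simp: inn_def S)
        moreover have "xR \<in> inn ?E x" "xL \<notin> inn ?E x" using 2 e ne by (auto simp: inn_def)
        ultimately have "card (inn ?S x) = card (inn ?E x)" by (metis card_swap1 fin fin_inn)
        then show ?thesis by (simp add: indeg_inn)
      next
        case 3
        have "inn ?S x = inn ?E x" using 3 by (auto simp: inn_def S)
        then show ?thesis by (simp add: indeg_inn)
      qed
    qed
  next
    show "outdeg ?M x = outdeg N x"
    proof -
      consider "x = xL" | "x = xR" | "x \<noteq> xL" "x \<noteq> xR" by blast
      then show ?thesis
      proof cases
        case 1
        have "outn ?S x = insert r (outn ?E x - {u})" using 1 ne by (auto simp: outn_def S)
        moreover have "u \<in> outn ?E x" "r \<notin> outn ?E x" using 1 eLu ne by (auto simp: outn_def)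
        ultimately have "card (outn ?S x) = card (outn ?E x)" by (metis card_swap1 fin fin_outn)
        then show ?thesis by (simp add: outdeg_outn)
      next
        case 2
        have "outn ?S x = insert u (outn ?E x - {r})" using 2 ne by (auto simp: outn_def S)
        moreover have "r \<in> outn ?E x" "u \<notin> outn ?E x" using 2 e ne iu' by (auto simp: outn_def)
        ultimately have "card (outn ?S x) = card (outn ?E x)" by (metis card_swap1 fin fin_outn)
        then show ?thesis by (simp add: outdeg_outn)
      next
        case 3
        have "outn ?S x = outn ?E x" using 3 by (auto simp: outn_def S)
        then show ?thesis by (simp add: outdeg_outn)
      qed
    qed
  qed
  have "edges ?M \<subseteq> nodes ?M \<times> nodes ?M" using sub e eLu by (auto simp: swp_def)
  then show ?thesis
    by (intro transfer[OF P, of id]) (auto simp: D A)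
qed



lemma ne1: "acyclic E \<Longrightarrow> (a,b) \<in> E \<Longrightarrow> a \<noteq> b"
  by (metis acyclic_def r_into_trancl')
lemma ne2: "acyclic E \<Longrightarrow> (a,b) \<in> E \<Longrightarrow> (b,c) \<in> E \<Longrightarrow> a \<noteq> c"
  by (metis acyclic_def r_into_trancl' trancl_into_trancl)
lemma ne3: "acyclic E \<Longrightarrow> (a,b) \<in> E \<Longrightarrow> (b,c) \<in> E \<Longrightarrow> (c,d) \<in> E \<Longrightarrow> a \<noteq> d"
  by (metis acyclic_def r_into_trancl' trancl_into_trancl)

lemma acyc_emp: "acyclic {}" by (simp add: acyclic_def)
lemma acyc_single: "a \<noteq> b \<Longrightarrow> acyclic {(a,b)}" by (simp add: acyc_emp)

lemma fresh_node: "finite (A::nat set) \<Longrightarrow> \<exists>w. w \<notin> A"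
  by (simp add: ex_new_if_finite)

lemma GL:
  assumes P: "phylo_net X N"
    and ir: "inn (edges N) r = {u, xR}" and iu: "inn (edges N) u = {xL}"
    and ou: "outn (edges N) u = {r, v}" and orr: "outn (edges N) r = {c}"
    and d: "xL \<noteq> xR" "u \<noteq> xR" "c \<noteq> v" "v \<noteq> r"
    and PS: "phylo_net X \<lparr>nodes = nodes N, edges = swp (edges N) xL xR u r, lbl = lbl N\<rparr>"
  shows "(head_step X ^^ 2) N \<lparr>nodes = nodes N, edges = swp (edges N) xL xR u r, lbl = lbl N\<rparr>"
proof -
  let ?E = "edges N"
  have fin: "finite ?E" using P by (rule fin_edges)
  have finN: "finite (nodes N)" using P by (simp add: phylo_net_def)
  have sub: "?E \<subseteq> nodes N \<times> nodes N" using P by (simp add: phylo_net_def)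
  have AE: "acyclic ?E" using P by (simp add: phylo_net_def)
  have ir': "(p,r) \<in> ?E \<longleftrightarrow> p = u \<or> p = xR" for p using ir by (auto simp: inn_def)
  have iu': "(p,u) \<in> ?E \<longleftrightarrow> p = xL" for p using iu by (auto simp: inn_def)
  have ou': "(u,q) \<in> ?E \<longleftrightarrow> q = r \<or> q = v" for q using ou by (auto simp: outn_def)
  have or': "(r,q) \<in> ?E \<longleftrightarrow> q = c" for q using orr by (auto simp: outn_def)
  have e1: "(xL,u) \<in> ?E" "(u,r) \<in> ?E" "(u,v) \<in> ?E" "(xR,r) \<in> ?E" "(r,c) \<in> ?E"
    using ir' iu' ou' or' by auto
  have n1: "xL \<noteq> u" "u \<noteq> r" "u \<noteq> v" "xR \<noteq> r" "r \<noteq> c"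
    using e1 ne1[OF AE] by blast+
  have n2: "u \<noteq> c" "xL \<noteq> r" "xR \<noteq> c" "xL \<noteq> v"
    using e1 ne2[OF AE] by blast+
  have n3: "xL \<noteq> c" using e1 ne3[OF AE] by blast
  have xLr: "(xL,r) \<notin> ?E" using ir' n1 d by auto
  have nod: "xL \<in> nodes N" "u \<in> nodes N" "r \<in> nodes N" "v \<in> nodes N" "xR \<in> nodes N" "c \<in> nodes N"
    using e1 sub by auto
  have AS: "acyclic (swp ?E xL xR u r)" using PS by (simp add: phylo_net_def)
  have noreach: "(u,xR) \<notin> ?E\<^sup>*"
  proof
    assume "(u,xR) \<in> ?E\<^sup>*"
    then have "(u,xR) \<in> {e \<in> {e\<in>?E. snd e \<noteq> u}. fst e \<noteq> xR}\<^sup>*"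
      by (intro path_no_out path_no_in)
    moreover have "{e \<in> {e\<in>?E. snd e \<noteq> u}. fst e \<noteq> xR} \<subseteq> swp ?E xL xR u r"
      by (auto simp: swp_def)
    ultimately have "(u,xR) \<in> (swp ?E xL xR u r)\<^sup>*" using rtrancl_mono by blast
    moreover have "(xR,u) \<in> swp ?E xL xR u r" by (simp add: swp_def)
    ultimately have "(xR,xR) \<in> (swp ?E xL xR u r)\<^sup>+" by (meson rtrancl_into_trancl2)
    then show False using AS by (simp add: acyclic_def)
  qed
  have n4: "xR \<noteq> v" using noreach e1 by auto
  obtain w1 where w1: "w1 \<notin> nodes N" using fresh_node[OF finN] by blast
  have wn: "w1 \<noteq> xL" "w1 \<noteq> u" "w1 \<noteq> r" "w1 \<noteq> v" "w1 \<noteq> xR" "w1 \<noteq> c" using w1 nod by auto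
  have wE: "(w1,q) \<notin> ?E" "(q,w1) \<notin> ?E" for q using w1 sub by auto
  define M1 where "M1 = \<lparr>nodes = nodes N - {r} \<union> {w1},
              edges = suppress (subdivide (?E - {(xR,r)}) (xL,u) w1) r \<union> {(xR, w1)},
              lbl = lbl N \<rparr>"
  have M1mem: "(p,q) \<in> edges M1 \<longleftrightarrow> ((p,q) \<in> ?E \<and> p \<noteq> r \<and> q \<noteq> r \<and> (p,q) \<noteq> (xL,u))
      \<or> (p,q) = (xL,w1) \<or> (p,q) = (w1,u) \<or> (p,q) = (u,c) \<or> (p,q) = (xR,w1)" for p q
    unfolding M1_def suppress_def subdivide_def using ir' or' n1 n2 n3 wn d e1
    by auto
  have eM1: "edges M1 = suppress (subdivide (?E - {(xR,r)}) (xL,u) w1) r \<union> {(xR, w1)}"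
    and nM1: "nodes M1 = nodes N - {r} \<union> {w1}" and lM1: "lbl M1 = lbl N" by (simp_all add: M1_def)
  let ?h = "id(r := w1)"
  have bij: "bij_betw ?h (nodes N) (nodes M1)"
  proof -
    have "inj_on ?h (nodes N)" using w1 by (auto simp: inj_on_def)
    moreover have "?h ` nodes N = nodes M1" using nod w1 unfolding nM1 by (auto simp: image_def)
    ultimately show ?thesis by (simp add: bij_betw_def)
  qed
  have card_ir: "card (inn ?E r) = 2" using ir d by simp
  have D1: "indeg M1 (?h x) = indeg N x" if x: "x \<in> nodes N" for x
  proof -
    have xw: "x \<noteq> w1" using x w1 by auto
    consider "x = r" | "x = u" | "x = c" | "x \<noteq> r" "x \<noteq> u" "x \<noteq> c" by blast
    then show ?thesis
    proof cases
      case 1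
      have "inn (edges M1) w1 = {xL, xR}" using wE wn by (auto simp: inn_def M1mem)
      then show ?thesis using 1 d card_ir by (simp add: indeg_inn)
    next
      case 2
      have "inn (edges M1) u = {w1}" using iu' wn n1 n2 by (auto simp: inn_def M1mem)
      then show ?thesis using 2 iu n1 by (simp add: indeg_inn)
    next
      case 3
      have "inn (edges M1) c = insert u (inn ?E c - {r})" using n1 n2 n3 wn by (auto simp: inn_def M1mem)
      moreover have "r \<in> inn ?E c" "u \<notin> inn ?E c" using e1 ou' n1 n2 d by (auto simp: inn_def)
      ultimately have "card (inn (edges M1) c) = card (inn ?E c)" by (metis card_swap1 fin fin_inn)
      then show ?thesis using 3 n1 by (simp add: indeg_inn)
    next
      case 4
      have "inn (edges M1) x = inn ?E x" using 4 xw or' by (auto simp: inn_def M1mem)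
      then show ?thesis using 4 by (simp add: indeg_inn)
    qed
  qed
  have D2: "outdeg M1 (?h x) = outdeg N x" if x: "x \<in> nodes N" for x
  proof -
    have xw: "x \<noteq> w1" using x w1 by auto
    consider "x = r" | "x = xL" | "x = xR" | "x = u" | "x \<noteq> r" "x \<noteq> xL" "x \<noteq> xR" "x \<noteq> u" by blast
    then show ?thesis
    proof cases
      case 1
      have "outn (edges M1) w1 = {u}" using wE wn by (auto simp: outn_def M1mem)
      then show ?thesis using 1 orr by (simp add: outdeg_outn)
    next
      case 2
      have "outn (edges M1) xL = insert w1 (outn ?E xL - {u})" using n1 n2 n3 wn d xLr by (auto simp: outn_def M1mem)
      moreover have "u \<in> outn ?E xL" "w1 \<notin> outn ?E xL" using e1 wE by (auto simp: outn_def)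
      ultimately have "card (outn (edges M1) xL) = card (outn ?E xL)" by (metis card_swap1 fin fin_outn)
      then show ?thesis using 2 n2 by (simp add: outdeg_outn)
    next
      case 3
      have "outn (edges M1) xR = insert w1 (outn ?E xR - {r})" using n1 n2 n3 wn d by (auto simp: outn_def M1mem)
      moreover have "r \<in> outn ?E xR" "w1 \<notin> outn ?E xR" using e1 wE by (auto simp: outn_def)
      ultimately have "card (outn (edges M1) xR) = card (outn ?E xR)" by (metis card_swap1 fin fin_outn)
      then show ?thesis using 3 n1 by (simp add: outdeg_outn)
    next
      case 4
      have "outn (edges M1) u = {v, c}" using n1 n2 n3 wn d ou' by (auto simp: outn_def M1mem)
      then show ?thesis using 4 n1 ou d by (simp add: outdeg_outn)
    next
      case 5
      have "outn (edges M1) x = outn ?E x" using 5 xw ir' by (auto simp: outn_def M1mem)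
      then show ?thesis using 5 by (simp add: outdeg_outn)
    qed
  qed
  have rleaf: "r \<notin> leaves N" using card_ir by (auto simp: leaves_def is_leaf_def indeg_inn)
  have subM1: "edges M1 \<subseteq> nodes M1 \<times> nodes M1"
  proof
    fix e assume "e \<in> edges M1"
    then obtain p q where e: "e = (p,q)" "(p,q) \<in> edges M1" by (cases e) auto
    then show "e \<in> nodes M1 \<times> nodes M1" using sub nod n1 n2 n3 wn w1 unfolding M1mem nM1 by auto
  qed
  have AM1: "acyclic (edges M1)"
  proof (rule acyc_map[where H = "insert (xR,u) ?E" and \<phi> = "id(w1 := u)" and K = "{(w1,u)}"])
    show "acyclic (insert (xR,u) ?E)" using AE noreach by (simp add: acyclic_insert)
    show "acyclic {(w1,u)}" using wn by (intro acyc_single) simp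
    show "\<And>a b. (a,b) \<in> {(w1,u)} \<Longrightarrow> (id(w1:=u)) a = (id(w1:=u)) b" by simp
    fix a b assume ab: "(a,b) \<in> edges M1"
    have uc: "(u,c) \<in> (insert (xR,u) ?E)\<^sup>+" using e1
      by (meson insertCI r_into_trancl' trancl_into_trancl)
    show "((id(w1:=u)) a, (id(w1:=u)) b) \<in> (insert (xR,u) ?E)\<^sup>+ \<or> (a,b) \<in> {(w1,u)}"
      using ab wE wn e1 uc unfolding M1mem by (auto simp: fun_upd_def)
  qed
  have PM1: "phylo_net X M1"
  proof (rule transfer[OF P bij])
    show "\<And>x. x \<in> nodes N \<Longrightarrow> indeg M1 (?h x) = indeg N x \<and> outdeg M1 (?h x) = outdeg N x"
      using D1 D2 by blast
    show "\<And>x. x \<in> leaves N \<Longrightarrow> lbl M1 (?h x) = lbl N x" using rleaf lM1 by auto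
  qed (rule subM1, rule AM1)
  have retN: "is_ret N r" using card_ir orr nod by (simp add: is_ret_def indeg_inn outdeg_outn)
  have HM1: "head_move X N (xR,r) (xL,u) w1 M1"
    unfolding head_move_def Let_def using e1 retN n1 w1 PM1 by (simp add: M1_def)
  let ?T = "\<lparr>nodes = nodes N, edges = swp (edges N) xL xR u r, lbl = lbl N\<rparr>"
  have retM1: "is_ret M1 w1"
    using D1[OF nod(3)] D2[OF nod(3)] retN unfolding is_ret_def nM1 by simp
  let ?S2 = "subdivide (edges M1 - {(xL,w1)}) (u,c) r"
  have S2mem: "(p,q) \<in> ?S2 \<longleftrightarrow> ((p,q) \<in> edges M1 \<and> (p,q) \<noteq> (xL,w1) \<and> (p,q) \<noteq> (u,c)) \<or> (p,q) = (u,r) \<or> (p,q) = (r,c)" for p q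
    by (auto simp: subdivide_def)
  have inw: "(a,w1) \<in> ?S2 \<longleftrightarrow> a = xR" for a
    unfolding S2mem M1mem using wE wn d by auto
  have outw: "(w1,b) \<in> ?S2 \<longleftrightarrow> b = u" for b
    unfolding S2mem M1mem using wE wn by auto
  have supp: "(p,q) \<in> suppress ?S2 w1 \<longleftrightarrow> ((p,q) \<in> ?S2 \<and> p \<noteq> w1 \<and> q \<noteq> w1) \<or> (p = xR \<and> q = u)" for p q
    unfolding suppress_def using inw outw by auto
  have eq2: "suppress ?S2 w1 \<union> {(xL,r)} = swp ?E xL xR u r"
  proof (rule set_eqI)
    fix e :: "nat \<times> nat"
    obtain p q where e: "e = (p,q)" by (cases e)
    have "(p,q) \<in> suppress ?S2 w1 \<union> {(xL,r)} \<longleftrightarrow> (p,q) \<in> swp ?E xL xR u r"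
    proof -
      have "(p,q) \<in> suppress ?S2 w1 \<union> {(xL,r)} \<longleftrightarrow>
        (((p,q) \<in> ?E \<and> p \<noteq> r \<and> q \<noteq> r \<and> (p,q) \<noteq> (xL,u)) \<or> (p,q) = (u,r) \<or> (p,q) = (r,c)
          \<or> (p = xR \<and> q = u) \<or> (p,q) = (xL,r))"
        unfolding Un_iff singleton_iff supp S2mem M1mem using wE wn n1 n2 ou' d by auto
      also have "\<dots> \<longleftrightarrow> (p,q) \<in> swp ?E xL xR u r"
        unfolding swp_def using e1 ir'[of p] or'[of q] n1 n2 d by auto
      finally show ?thesis .
    qed
    then show "e \<in> suppress ?S2 w1 \<union> {(xL,r)} \<longleftrightarrow> e \<in> swp ?E xL xR u r" using e by simp
  qed
  have HM2: "head_move X M1 (xL,w1) (u,c) r ?T"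
    unfolding head_move_def Let_def
    using retM1 w1 wn n1 n2 PS M1mem nod eq2 by (auto simp: nM1 lM1)
  have s1: "head_step X N M1" using HM1 unfolding head_step_def by blast
  have s2: "head_step X M1 ?T" using HM2 unfolding head_step_def by blast
  have "(head_step X ^^ Suc (Suc 0)) N ?T"
    by (rule relpowp_Suc_I[OF relpowp_Suc_I[OF relpowp_0_I[of "head_step X" N] s1] s2])
  then show ?thesis by (simp add: numeral_2_eq_2)
qed


lemma noout_rtrancl: "(x,y) \<in> E\<^sup>* \<Longrightarrow> (\<And>z. (x,z) \<notin> E) \<Longrightarrow> y = x"
  by (erule converse_rtranclE) auto

lemma L4:
  assumes P: "phylo_net X N"
    and ir: "inn (edges N) r = {u, xR}" and iu: "inn (edges N) u = {xL}"
    and ou: "outn (edges N) u = {r, v}" and orr: "outn (edges N) r = {v}"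
    and d: "xL \<noteq> xR" "u \<noteq> xR" "v \<noteq> r"
    and PT: "phylo_net X \<lparr>nodes = nodes N, edges = swp (edges N) xL xR u r, lbl = lbl N\<rparr>"
  shows "(head_step X ^^ 4) N \<lparr>nodes = nodes N, edges = swp (edges N) xL xR u r, lbl = lbl N\<rparr>"
proof -
  let ?E = "edges N"
  have fin: "finite ?E" using P by (rule fin_edges)
  have finN: "finite (nodes N)" using P by (simp add: phylo_net_def)
  have sub: "?E \<subseteq> nodes N \<times> nodes N" using P by (simp add: phylo_net_def)
  have AE: "acyclic ?E" using P by (simp add: phylo_net_def)
  have AT: "acyclic (swp ?E xL xR u r)" using PT by (simp add: phylo_net_def)
  have ir': "(p,r) \<in> ?E \<longleftrightarrow> p = u \<or> p = xR" for p using ir by (auto simp: inn_def)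
  have iu': "(p,u) \<in> ?E \<longleftrightarrow> p = xL" for p using iu by (auto simp: inn_def)
  have ou': "(u,q) \<in> ?E \<longleftrightarrow> q = r \<or> q = v" for q using ou by (auto simp: outn_def)
  have or': "(r,q) \<in> ?E \<longleftrightarrow> q = v" for q using orr by (auto simp: outn_def)
  have e1: "(xL,u) \<in> ?E" "(u,r) \<in> ?E" "(u,v) \<in> ?E" "(xR,r) \<in> ?E" "(r,v) \<in> ?E"
    using ir' iu' ou' or' by auto
  have n1: "xL \<noteq> u" "u \<noteq> r" "u \<noteq> v" "xR \<noteq> r" "r \<noteq> v"
    using e1 ne1[OF AE] by blast+
  have n2: "xL \<noteq> r" "xR \<noteq> v" "xL \<noteq> v"
    using e1 ne2[OF AE] by blast+
  have nod: "xL \<in> nodes N" "u \<in> nodes N" "r \<in> nodes N" "v \<in> nodes N" "xR \<in> nodes N"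
    using e1 sub by auto
  have inv2: "{u, r} \<subseteq> inn ?E v" using e1 by (auto simp: inn_def)
  have cinv: "card (inn ?E v) \<ge> 2"
    using card_mono[OF fin_inn[OF fin] inv2] n1 by simp
  have retv: "is_ret N v"
  proof -
    have "is_root N v \<or> is_leaf N v \<or> is_split N v \<or> is_ret N v" using P nod by (auto simp: phylo_net_def)
    then show ?thesis using cinv
      by (auto simp: is_root_def is_leaf_def is_split_def indeg_inn)
  qed
  have iv: "inn ?E v = {u, r}"
    using retv card2_eq[OF fin_inn[OF fin], of v u r] e1 n1 by (auto simp: is_ret_def indeg_inn inn_def)
  have "card (outn ?E v) = 1" using retv by (simp add: is_ret_def outdeg_outn)
  then obtain dd where ov: "outn ?E v = {dd}" by (meson card_1_singletonE)
  have iv': "(p,v) \<in> ?E \<longleftrightarrow> p = u \<or> p = r" for p using iv by (auto simp: inn_def)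
  have ov': "(v,q) \<in> ?E \<longleftrightarrow> q = dd" for q using ov by (auto simp: outn_def)
  have evd: "(v,dd) \<in> ?E" using ov' by simp
  have n3: "dd \<noteq> v" "dd \<noteq> u" "dd \<noteq> r" using evd e1 ne1[OF AE] ne2[OF AE] by blast+
  have n4: "xL \<noteq> dd" "xR \<noteq> dd" using evd e1 ne3[OF AE] by blast+
  have ddn: "dd \<in> nodes N" using evd sub by auto
  have bl: "bij_betw (lbl N) (leaves N) X" and cX: "card X \<ge> 2" and fX: "finite X"
    using P by (auto simp: phylo_net_def)
  have lsub: "leaves N \<subseteq> nodes N" by (auto simp: leaves_def is_leaf_def)
  have "card (leaves N) \<ge> 2" using bij_betw_same_card[OF bl] cX by simp
  then have "\<not> leaves N \<subseteq> {dd}"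
    using card_mono[of "{dd}" "leaves N"] by auto
  then obtain l where l: "l \<in> leaves N" "l \<noteq> dd" by auto
  have lN: "l \<in> nodes N" "card (inn ?E l) = 1" "card (outn ?E l) = 0"
    using l by (auto simp: leaves_def is_leaf_def indeg_inn outdeg_outn)
  have ol: "(l,q) \<notin> ?E" for q using lN(3) fin_outn[OF fin, of l] by (auto simp: outn_def)
  obtain a where ia: "inn ?E l = {a}" using lN(2) by (meson card_1_singletonE)
  have il': "(p,l) \<in> ?E \<longleftrightarrow> p = a" for p using ia by (auto simp: inn_def)
  have eal: "(a,l) \<in> ?E" using il' by simp
  have nl: "l \<noteq> u" "l \<noteq> r" "l \<noteq> v" "l \<noteq> xL" "l \<noteq> xR"
    using ol e1 evd by blast+
  have na: "a \<noteq> u" "a \<noteq> r" "a \<noteq> v" "a \<noteq> l"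
    using eal ou' or' ov' nl l(2) ne1[OF AE] by blast+
  have an: "a \<in> nodes N" using eal sub by auto
  obtain w where w: "w \<notin> nodes N" using fresh_node[OF finN] by blast
  have wn: "w \<noteq> xL" "w \<noteq> u" "w \<noteq> r" "w \<noteq> v" "w \<noteq> xR" "w \<noteq> dd" "w \<noteq> l" "w \<noteq> a"
    using w nod ddn lN an by auto
  have wE: "(w,q) \<notin> ?E" "(q,w) \<notin> ?E" for q using w sub by auto
  define M1 where "M1 = \<lparr>nodes = nodes N - {v} \<union> {w},
              edges = suppress (subdivide (?E - {(u,v)}) (a,l) w) v \<union> {(u, w)},
              lbl = lbl N \<rparr>"
  have eM1: "edges M1 = suppress (subdivide (?E - {(u,v)}) (a,l) w) v \<union> {(u, w)}"
    and nM1: "nodes M1 = nodes N - {v} \<union> {w}" and lM1: "lbl M1 = lbl N" by (simp_all add: M1_def)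
  let ?S1 = "subdivide (?E - {(u,v)}) (a,l) w"
  have S1mem: "(p,q) \<in> ?S1 \<longleftrightarrow> ((p,q) \<in> ?E \<and> (p,q) \<noteq> (u,v) \<and> (p,q) \<noteq> (a,l)) \<or> (p,q) = (a,w) \<or> (p,q) = (w,l)" for p q
    by (auto simp: subdivide_def)
  have inv1: "(x,v) \<in> ?S1 \<longleftrightarrow> x = r" for x
    unfolding S1mem using iv'[of x] wn nl n1 by auto
  have outv1: "(v,y) \<in> ?S1 \<longleftrightarrow> y = dd" for y
    unfolding S1mem using ov'[of y] wn na l(2) n1 by auto
  have supp1: "(p,q) \<in> suppress ?S1 v \<longleftrightarrow> ((p,q) \<in> ?S1 \<and> p \<noteq> v \<and> q \<noteq> v) \<or> (p = r \<and> q = dd)" for p q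
    unfolding suppress_def using inv1 outv1 by auto
  have M1mem: "(p,q) \<in> edges M1 \<longleftrightarrow> ((p,q) \<in> ?E \<and> p \<noteq> v \<and> q \<noteq> v \<and> (p,q) \<noteq> (a,l))
      \<or> (p,q) = (a,w) \<or> (p,q) = (w,l) \<or> (p,q) = (r,dd) \<or> (p,q) = (u,w)" for p q
    unfolding eM1 Un_iff singleton_iff supp1 S1mem using wn na nl by auto
  let ?h = "id(v := w)"
  have bij: "bij_betw ?h (nodes N) (nodes M1)"
  proof -
    have "inj_on ?h (nodes N)" using w by (auto simp: inj_on_def)
    moreover have "?h ` nodes N = nodes M1" using nod w unfolding nM1 by (auto simp: image_def)
    ultimately show ?thesis by (simp add: bij_betw_def)
  qed
  have D1: "indeg M1 (?h x) = indeg N x" if x: "x \<in> nodes N" for x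
  proof -
    have xw: "x \<noteq> w" using x w by auto
    consider "x = v" | "x = l" | "x = dd" | "x \<noteq> v" "x \<noteq> l" "x \<noteq> dd" by blast
    then show ?thesis
    proof cases
      case 1
      have "inn (edges M1) w = {a, u}" using wE wn by (auto simp: inn_def M1mem)
      then show ?thesis using 1 na n1 iv by (simp add: indeg_inn)
    next
      case 2
      have "inn (edges M1) l = {w}" using il' wn nl l(2) by (auto simp: inn_def M1mem)
      then show ?thesis using 2 ia nl by (simp add: indeg_inn)
    next
      case 3
      have "inn (edges M1) dd = insert r (inn ?E dd - {v})" using n1 n3 wn l(2) by (auto simp: inn_def M1mem)
      moreover have "v \<in> inn ?E dd" "r \<notin> inn ?E dd" using evd or' n3 by (auto simp: inn_def)
      ultimately have "card (inn (edges M1) dd) = card (inn ?E dd)" by (metis card_swap1 fin fin_inn)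
      then show ?thesis using 3 n3 by (simp add: indeg_inn)
    next
      case 4
      have "inn (edges M1) x = inn ?E x" using 4 xw ov' by (auto simp: inn_def M1mem)
      then show ?thesis using 4 by (simp add: indeg_inn)
    qed
  qed
  have D2: "outdeg M1 (?h x) = outdeg N x" if x: "x \<in> nodes N" for x
  proof -
    have xw: "x \<noteq> w" using x w by auto
    consider "x = v" | "x = a" | "x = u" | "x = r" | "x \<noteq> v" "x \<noteq> a" "x \<noteq> u" "x \<noteq> r" by blast
    then show ?thesis
    proof cases
      case 1
      have "outn (edges M1) w = {l}" using wE wn by (auto simp: outn_def M1mem)
      then show ?thesis using 1 ov by (simp add: outdeg_outn)
    next
      case 2
      have "outn (edges M1) a = insert w (outn ?E a - {l})" using na wn iv' by (auto simp: outn_def M1mem)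
      moreover have "l \<in> outn ?E a" "w \<notin> outn ?E a" using eal wE by (auto simp: outn_def)
      ultimately have "card (outn (edges M1) a) = card (outn ?E a)" by (metis card_swap1 fin fin_outn)
      then show ?thesis using 2 na by (simp add: outdeg_outn)
    next
      case 3
      have "outn (edges M1) u = {r, w}" using n1 wn na ou' by (auto simp: outn_def M1mem)
      then show ?thesis using 3 n1 ou wn by (simp add: outdeg_outn)
    next
      case 4
      have "outn (edges M1) r = {dd}" using n1 wn na or' by (auto simp: outn_def M1mem)
      then show ?thesis using 4 n1 orr by (simp add: outdeg_outn)
    next
      case 5
      have "outn (edges M1) x = outn ?E x" using 5 xw iv' by (auto simp: outn_def M1mem)
      then show ?thesis using 5 by (simp add: outdeg_outn)
    qed
  qed
  have vleaf: "v \<notin> leaves N" using iv n1 by (auto simp: leaves_def is_leaf_def indeg_inn)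
  have subM1: "edges M1 \<subseteq> nodes M1 \<times> nodes M1"
  proof
    fix e assume "e \<in> edges M1"
    then obtain p q where e: "e = (p,q)" "(p,q) \<in> edges M1" by (cases e) auto
    then show "e \<in> nodes M1 \<times> nodes M1" using sub nod ddn an lN w wn n1 n3 na nl unfolding M1mem nM1 by auto
  qed
  have noul: "(l,u) \<notin> ?E\<^sup>*" using noout_rtrancl[of l u ?E] ol nl by auto
  have AM1: "acyclic (edges M1)"
  proof (rule acyc_map[where H = "insert (u,l) ?E" and \<phi> = "id(w := l)" and K = "{(w,l)}"])
    show "acyclic (insert (u,l) ?E)" using AE noul by simp
    show "acyclic {(w,l)}" using wn by (intro acyc_single) simp
    show "\<And>a b. (a,b) \<in> {(w,l)} \<Longrightarrow> (id(w:=l)) a = (id(w:=l)) b" by simp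
    fix p q assume ab: "(p,q) \<in> edges M1"
    have rd: "(r,dd) \<in> (insert (u,l) ?E)\<^sup>+" using e1 evd
      by (meson insertCI r_into_trancl' trancl_into_trancl)
    show "((id(w:=l)) p, (id(w:=l)) q) \<in> (insert (u,l) ?E)\<^sup>+ \<or> (p,q) \<in> {(w,l)}"
      using ab wE wn eal rd unfolding M1mem by (auto simp: fun_upd_def)
  qed
  have PM1: "phylo_net X M1"
  proof (rule transfer[OF P bij])
    show "\<And>x. x \<in> nodes N \<Longrightarrow> indeg M1 (?h x) = indeg N x \<and> outdeg M1 (?h x) = outdeg N x"
      using D1 D2 by blast
    show "\<And>x. x \<in> leaves N \<Longrightarrow> lbl M1 (?h x) = lbl N x" using vleaf lM1 by auto
  qed (rule subM1, rule AM1)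
  have HM1: "head_move X N (u,v) (a,l) w M1"
    unfolding head_move_def Let_def using e1 retv eal na w PM1 by (simp add: M1_def)
  have xLr: "(xL,r) \<notin> ?E" using ir' n1 d by auto
  have iuM: "inn (edges M1) u = {xL}" using iu' n1 n2 n3 wn nl by (auto simp: inn_def M1mem)
  have irM: "inn (edges M1) r = {u, xR}" using ir' n1 n2 n3 wn nl d by (auto simp: inn_def M1mem)
  have ouM: "outn (edges M1) u = {r, w}" using n1 wn na ou' by (auto simp: outn_def M1mem)
  have orM: "outn (edges M1) r = {dd}" using n1 wn na or' by (auto simp: outn_def M1mem)
  have xRrM: "(xR,r) \<in> edges M1" using e1 n1 n2 nl unfolding M1mem by auto
  have xLrM: "(xL,r) \<notin> edges M1" using xLr n1 n2 n3 wn unfolding M1mem by auto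
  let ?SW1 = "swp (edges M1) xL xR u r"
  have SW1mem: "(p,q) \<in> ?SW1 \<longleftrightarrow> ((p,q) \<in> edges M1 \<and> (p,q) \<noteq> (xL,u) \<and> (p,q) \<noteq> (xR,r)) \<or> (p,q) = (xR,u) \<or> (p,q) = (xL,r)" for p q
    by (auto simp: swp_def)
  have swpE: "(p,q) \<in> swp ?E xL xR u r \<longleftrightarrow> ((p,q) \<in> ?E \<and> (p,q) \<noteq> (xL,u) \<and> (p,q) \<noteq> (xR,r)) \<or> (p,q) = (xR,u) \<or> (p,q) = (xL,r)" for p q
    by (auto simp: swp_def)
  have nolu: "(l,u) \<notin> (swp ?E xL xR u r)\<^sup>*"
  proof -
    have "(l,z) \<notin> swp ?E xL xR u r" for z using ol nl unfolding swpE by auto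
    then show ?thesis using noout_rtrancl[of l u] nl by auto
  qed
  have ASW1: "acyclic ?SW1"
  proof (rule acyc_map[where H = "insert (u,l) (swp ?E xL xR u r)" and \<phi> = "id(w := l)" and K = "{(w,l)}"])
    show "acyclic (insert (u,l) (swp ?E xL xR u r))" using AT nolu by simp
    show "acyclic {(w,l)}" using wn by (intro acyc_single) simp
    show "\<And>a b. (a,b) \<in> {(w,l)} \<Longrightarrow> (id(w:=l)) a = (id(w:=l)) b" by simp
    fix p q assume ab: "(p,q) \<in> ?SW1"
    have rv: "(r,v) \<in> swp ?E xL xR u r" "(v,dd) \<in> swp ?E xL xR u r" "(a,l) \<in> swp ?E xL xR u r"
      using e1 evd eal n1 n2 n3 nl unfolding swpE by auto
    have rd: "(r,dd) \<in> (insert (u,l) (swp ?E xL xR u r))\<^sup>+" using rv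
      by (meson insertCI r_into_trancl' trancl_into_trancl)
    have hh: "(x,y) \<in> swp ?E xL xR u r \<Longrightarrow> (x,y) \<in> (insert (u,l) (swp ?E xL xR u r))\<^sup>+" for x y
      by auto
    have ul: "(u,l) \<in> (insert (u,l) (swp ?E xL xR u r))\<^sup>+" by auto
    have sE: "(xR,u) \<in> swp ?E xL xR u r" "(xL,r) \<in> swp ?E xL xR u r" by (auto simp: swp_def)
    have "((p,q) \<in> ?E \<and> (p,q) \<noteq> (xL,u) \<and> (p,q) \<noteq> (xR,r)) \<or> (p,q) = (a,w) \<or> (p,q) = (w,l)
       \<or> (p,q) = (r,dd) \<or> (p,q) = (u,w) \<or> (p,q) = (xR,u) \<or> (p,q) = (xL,r)"
      using ab unfolding SW1mem M1mem by blast
    then show "((id(w:=l)) p, (id(w:=l)) q) \<in> (insert (u,l) (swp ?E xL xR u r))\<^sup>+ \<or> (p,q) \<in> {(w,l)}"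
    proof (elim disjE)
      assume h: "(p,q) \<in> ?E \<and> (p,q) \<noteq> (xL,u) \<and> (p,q) \<noteq> (xR,r)"
      then have "p \<noteq> w" "q \<noteq> w" using wE by auto
      moreover have "(p,q) \<in> swp ?E xL xR u r" using h unfolding swpE by blast
      ultimately show ?thesis using hh by simp
    qed (use wn rv rd ul sE hh in simp_all)
  qed
  have PS1: "phylo_net X \<lparr>nodes = nodes M1, edges = ?SW1, lbl = lbl M1\<rparr>"
    by (rule swap_phylo[OF PM1 iuM xRrM xLrM d(1) n1(2) ASW1])
  have G2: "(head_step X ^^ 2) M1 \<lparr>nodes = nodes M1, edges = ?SW1, lbl = lbl M1\<rparr>"
    by (rule GL[OF PM1 irM iuM ouM orM d(1) d(2) _ _ PS1]) (use wn in auto)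
  let ?T1 = "\<lparr>nodes = nodes M1, edges = ?SW1, lbl = lbl M1\<rparr>"
  let ?T = "\<lparr>nodes = nodes N, edges = swp (edges N) xL xR u r, lbl = lbl N\<rparr>"
  have iwT: "inn ?SW1 w = {a, u}" using wE wn by (auto simp: inn_def SW1mem M1mem)
  have owT: "outn ?SW1 w = {l}" using wE wn by (auto simp: outn_def SW1mem M1mem)
  have retT1: "is_ret ?T1 w" using iwT owT na by (simp add: is_ret_def indeg_inn outdeg_outn nM1)
  let ?S4 = "subdivide (?SW1 - {(u,w)}) (r,dd) v"
  have S4mem: "(p,q) \<in> ?S4 \<longleftrightarrow> ((p,q) \<in> ?SW1 \<and> (p,q) \<noteq> (u,w) \<and> (p,q) \<noteq> (r,dd)) \<or> (p,q) = (r,v) \<or> (p,q) = (v,dd)" for p q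
    by (auto simp: subdivide_def)
  have inw4: "(x,w) \<in> ?S4 \<longleftrightarrow> x = a" for x
    unfolding S4mem SW1mem M1mem using wE wn na by auto
  have outw4: "(w,y) \<in> ?S4 \<longleftrightarrow> y = l" for y
    unfolding S4mem SW1mem M1mem using wE wn by auto
  have supp4: "(p,q) \<in> suppress ?S4 w \<longleftrightarrow> ((p,q) \<in> ?S4 \<and> p \<noteq> w \<and> q \<noteq> w) \<or> (p = a \<and> q = l)" for p q
    unfolding suppress_def using inw4 outw4 by auto
  have SW1E: "(p,q) \<in> ?SW1 \<longleftrightarrow> ((p,q) \<in> ?E \<and> p \<noteq> v \<and> q \<noteq> v \<and> (p,q) \<noteq> (a,l) \<and> (p,q) \<noteq> (xL,u) \<and> (p,q) \<noteq> (xR,r))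
     \<or> (p,q) = (a,w) \<or> (p,q) = (w,l) \<or> (p,q) = (r,dd) \<or> (p,q) = (u,w) \<or> (p,q) = (xR,u) \<or> (p,q) = (xL,r)" for p q
    unfolding SW1mem M1mem using wn n1 n3 by auto
  have S4E: "((p,q) \<in> ?S4 \<and> p \<noteq> w \<and> q \<noteq> w) \<longleftrightarrow>
     ((p,q) \<in> ?E \<and> p \<noteq> v \<and> q \<noteq> v \<and> (p,q) \<noteq> (a,l) \<and> (p,q) \<noteq> (xL,u) \<and> (p,q) \<noteq> (xR,r))
     \<or> (p,q) = (xR,u) \<or> (p,q) = (xL,r) \<or> (p,q) = (r,v) \<or> (p,q) = (v,dd)" for p q
    unfolding S4mem SW1E using wE wn n1 n3 or' by auto
  have fin4: "((p,q) \<in> ?E \<and> p \<noteq> v \<and> q \<noteq> v \<and> (p,q) \<noteq> (a,l) \<and> (p,q) \<noteq> (xL,u) \<and> (p,q) \<noteq> (xR,r))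
     \<or> (p,q) = (xR,u) \<or> (p,q) = (xL,r) \<or> (p,q) = (r,v) \<or> (p,q) = (v,dd) \<or> (p,q) = (a,l) \<or> (p,q) = (u,v)
     \<longleftrightarrow> (p,q) \<in> swp ?E xL xR u r" for p q
    unfolding swpE using e1 evd eal iv'[of p] ov'[of q] n1 n2 n3 n4 na nl d by auto
  have eq4: "suppress ?S4 w \<union> {(u,v)} = swp ?E xL xR u r"
  proof (rule set_eqI)
    fix e :: "nat \<times> nat"
    obtain p q where e: "e = (p,q)" by (cases e)
    have "(p,q) \<in> suppress ?S4 w \<union> {(u,v)} \<longleftrightarrow> ((p,q) \<in> ?S4 \<and> p \<noteq> w \<and> q \<noteq> w) \<or> (p,q) = (a,l) \<or> (p,q) = (u,v)"
      unfolding Un_iff singleton_iff supp4 by blast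
    also have "\<dots> \<longleftrightarrow> (p,q) \<in> swp ?E xL xR u r" unfolding S4E fin4[symmetric] by blast
    finally show "e \<in> suppress ?S4 w \<union> {(u,v)} \<longleftrightarrow> e \<in> swp ?E xL xR u r" using e by simp
  qed
  have nT: "nodes M1 - {w} \<union> {v} = nodes N" using nod w unfolding nM1 by auto
  have HM4: "head_move X ?T1 (u,w) (r,dd) v ?T"
  proof -
    have "(u,w) \<in> ?SW1" "(r,dd) \<in> ?SW1 - {(u,w)}" "v \<notin> nodes M1"
      using n1 n2 n3 wn w unfolding Diff_iff singleton_iff SW1E nM1 by auto
    then show ?thesis unfolding head_move_def Let_def using retT1 eq4 nT PT lM1 by simp
  qed
  have s1: "head_step X N M1" using HM1 unfolding head_step_def by blast
  have s4: "head_step X ?T1 ?T" using HM4 unfolding head_step_def by blast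
  have "(head_step X ^^ Suc (Suc 0)) M1 ?T1" using G2 by (simp add: numeral_2_eq_2)
  then have "(head_step X ^^ Suc (Suc (Suc 0))) M1 ?T" using s4 by (rule relpowp_Suc_I)
  then have "(head_step X ^^ Suc (Suc (Suc (Suc 0)))) N ?T" by (rule relpowp_Suc_I2[where P = "head_step X", OF s1])
  then show ?thesis by (simp add: numeral_eq_Suc)
qed



theorem mainTheorem9:
  fixes X :: "'x set" and N N' :: "'x network" and xL xR r u v w :: nat
  assumes "phylo_net X N"
    and "is_ret N r"
    and "is_split N u"
    and "(xL, u) \<in> edges N" and "(u, r) \<in> edges N" and "(u, v) \<in> edges N" and "v \<noteq> r"
    and "(xR, r) \<in> edges N" and "xR \<noteq> u"
    and "tail_move X N (u, v) (xR, r) w N'"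
  shows "\<exists>k \<le> 4. \<exists>N''. (head_step X ^^ k) N N'' \<and> net_iso N'' N'"
proof -
  note P = assms(1)
  let ?E = "edges N"
  have fin: "finite ?E" using P by (rule fin_edges)
  have sub: "?E \<subseteq> nodes N \<times> nodes N" using P by (simp add: phylo_net_def)
  have AE: "acyclic ?E" using P by (simp add: phylo_net_def)
  have tm: "w \<notin> nodes N"
    "N' = \<lparr>nodes = nodes N - {u} \<union> {w}, edges = suppress (subdivide (?E - {(u,v)}) (xR,r) w) u \<union> {(w,v)}, lbl = lbl N\<rparr>"
    "phylo_net X N'"
  proof -
    have "w \<notin> nodes N \<and> N' = \<lparr>nodes = nodes N - {u} \<union> {w}, edges = suppress (subdivide (?E - {(u,v)}) (xR,r) w) u \<union> {(w,v)}, lbl = lbl N\<rparr>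
      \<and> phylo_net X N'"
      using assms(10) unfolding tail_move_def Let_def fst_conv snd_conv by blast
    then show "w \<notin> nodes N"
    "N' = \<lparr>nodes = nodes N - {u} \<union> {w}, edges = suppress (subdivide (?E - {(u,v)}) (xR,r) w) u \<union> {(w,v)}, lbl = lbl N\<rparr>"
    "phylo_net X N'" by blast+
  qed
  have ir: "inn ?E r = {u, xR}"
    using assms(2,5,8,9) card2_eq[OF fin_inn[OF fin], of r u xR]
    by (auto simp: is_ret_def indeg_inn inn_def)
  have "card (outn ?E r) = 1" using assms(2) by (simp add: is_ret_def outdeg_outn)
  then obtain c where orr: "outn ?E r = {c}" by (meson card_1_singletonE)
  have iu: "inn ?E u = {xL}"
    using assms(3,4) card1_eq[OF fin_inn[OF fin], of u xL] by (auto simp: is_split_def indeg_inn inn_def)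
  have ou: "outn ?E u = {r, v}"
    using assms(3,5,6,7) card2_eq[OF fin_outn[OF fin], of u r v] by (auto simp: is_split_def outdeg_outn outn_def)
  have ir': "(p,r) \<in> ?E \<longleftrightarrow> p = u \<or> p = xR" for p using ir by (auto simp: inn_def)
  have iu': "(p,u) \<in> ?E \<longleftrightarrow> p = xL" for p using iu by (auto simp: inn_def)
  have ou': "(u,q) \<in> ?E \<longleftrightarrow> q = r \<or> q = v" for q using ou by (auto simp: outn_def)
  have e1: "(xL,u) \<in> ?E" "(u,r) \<in> ?E" "(u,v) \<in> ?E" "(xR,r) \<in> ?E" using assms by auto
  have n1: "xL \<noteq> u" "u \<noteq> r" "u \<noteq> v" "xR \<noteq> r" using e1 ne1[OF AE] by blast+
  have n2: "xL \<noteq> r" "xL \<noteq> v" using e1 ne2[OF AE] by blast+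
  have nod: "xL \<in> nodes N" "u \<in> nodes N" "r \<in> nodes N" "v \<in> nodes N" "xR \<in> nodes N"
    using e1 sub by auto
  have w: "w \<notin> nodes N" by (rule tm(1))
  have wn: "w \<noteq> xL" "w \<noteq> u" "w \<noteq> r" "w \<noteq> v" "w \<noteq> xR" using w nod by auto
  have wE: "(w,q) \<notin> ?E" "(q,w) \<notin> ?E" for q using w sub by auto
  let ?S = "subdivide (?E - {(u,v)}) (xR,r) w"
  have Smem: "(p,q) \<in> ?S \<longleftrightarrow> ((p,q) \<in> ?E \<and> (p,q) \<noteq> (u,v) \<and> (p,q) \<noteq> (xR,r)) \<or> (p,q) = (xR,w) \<or> (p,q) = (w,r)" for p q
    by (auto simp: subdivide_def)
  have inu: "(x,u) \<in> ?S \<longleftrightarrow> x = xL" for x unfolding Smem using iu'[of x] wn n1 by auto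
  have outu: "(u,y) \<in> ?S \<longleftrightarrow> y = r" for y unfolding Smem using ou'[of y] wn n1 assms(7,9) by auto
  have supp: "(p,q) \<in> suppress ?S u \<longleftrightarrow> ((p,q) \<in> ?S \<and> p \<noteq> u \<and> q \<noteq> u) \<or> (p = xL \<and> q = r)" for p q
    unfolding suppress_def using inu outu by auto
  have N'mem: "(p,q) \<in> edges N' \<longleftrightarrow> ((p,q) \<in> ?E \<and> p \<noteq> u \<and> q \<noteq> u \<and> (p,q) \<noteq> (xR,r))
     \<or> (p,q) = (xR,w) \<or> (p,q) = (w,r) \<or> (p,q) = (xL,r) \<or> (p,q) = (w,v)" for p q
    unfolding tm(2) by (simp only: network.select_convs Un_iff singleton_iff supp Smem) (use wn n1 assms(9) in auto)
  have swpE: "(p,q) \<in> swp ?E xL xR u r \<longleftrightarrow> ((p,q) \<in> ?E \<and> (p,q) \<noteq> (xL,u) \<and> (p,q) \<noteq> (xR,r)) \<or> (p,q) = (xR,u) \<or> (p,q) = (xL,r)" for p q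
    by (auto simp: swp_def)
  have AN': "acyclic (edges N')" using tm(3) by (simp add: phylo_net_def)
  have map: "(p,q) \<in> swp ?E xL xR u r \<Longrightarrow> ((id(u:=w)) p, (id(u:=w)) q) \<in> edges N'" for p q
  proof -
    assume h: "(p,q) \<in> swp ?E xL xR u r"
    then have "((p,q) \<in> ?E \<and> (p,q) \<noteq> (xL,u) \<and> (p,q) \<noteq> (xR,r)) \<or> (p,q) = (xR,u) \<or> (p,q) = (xL,r)"
      unfolding swpE .
    then show ?thesis
    proof (elim disjE)
      assume h: "(p,q) \<in> ?E \<and> (p,q) \<noteq> (xL,u) \<and> (p,q) \<noteq> (xR,r)"
      consider "p = u" | "q = u" | "p \<noteq> u" "q \<noteq> u" by blast
      then show ?thesis
      proof cases
        case 1 then have "q = r \<or> q = v" using h ou' by auto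
        then show ?thesis using 1 n1 unfolding N'mem by auto
      next
        case 2 then have "p = xL" using h iu' by auto
        then show ?thesis using 2 h by auto
      next
        case 3 then show ?thesis using h unfolding N'mem by auto
      qed
    qed (use wn n1 n2 assms(9) in \<open>auto simp: N'mem\<close>)
  qed
  have AS: "acyclic (swp ?E xL xR u r)"
  proof (rule acyc_map[where H = "edges N'" and \<phi> = "id(u:=w)" and K = "{}"])
    show "acyclic (edges N')" by (rule AN')
    show "acyclic {}" by (rule acyc_emp)
    show "\<And>a b. (a, b) \<in> {} \<Longrightarrow> (id(u := w)) a = (id(u := w)) b" by simp
    fix a b assume "(a,b) \<in> swp ?E xL xR u r"
    then show "((id(u := w)) a, (id(u := w)) b) \<in> (edges N')\<^sup>+ \<or> (a,b) \<in> {}"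
      using map by blast
  qed
  let ?T = "\<lparr>nodes = nodes N, edges = swp (edges N) xL xR u r, lbl = lbl N\<rparr>"
  have iso: "net_iso ?T N'"
    unfolding net_iso_def
  proof (intro exI conjI ballI)
    let ?h = "id(u := w)"
    have "inj_on ?h (nodes N)" using w by (auto simp: inj_on_def)
    moreover have "?h ` nodes N = nodes N'" using nod w unfolding tm(2) by (auto simp: image_def)
    ultimately show "bij_betw ?h (nodes ?T) (nodes N')" by (simp add: bij_betw_def)
    fix x y assume x: "x \<in> nodes ?T" and y: "y \<in> nodes ?T"
    have xw: "x \<noteq> w" "y \<noteq> w" using x y w by auto
    show "((x, y) \<in> edges ?T) = ((?h x, ?h y) \<in> edges N')"
    proof -
      consider "x = u" "y = u" | "x = u" "y \<noteq> u" | "x \<noteq> u" "y = u" | "x \<noteq> u" "y \<noteq> u" by blast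
      then show ?thesis
      proof cases
        case 1 then show ?thesis using n1 wn wE assms(9) e1 ne1[OF AE] by (auto simp: swpE N'mem)
      next
        case 2 then show ?thesis using n1 n2 wn wE assms(9) ou' by (auto simp: swpE N'mem)
      next
        case 3 then show ?thesis using n1 n2 wn wE xw assms(9) iu' by (auto simp: swpE N'mem)
      next
        case 4 then show ?thesis using n1 n2 wn wE xw assms(9) by (auto simp: swpE N'mem)
      qed
    qed
  next
    fix x assume x: "x \<in> leaves ?T"
    have "(u,r) \<in> swp ?E xL xR u r" using e1 n1 assms(9) unfolding swpE by auto
    moreover have "finite (swp ?E xL xR u r)" using fin by (simp add: swp_def)
    ultimately have "r \<in> outn (swp ?E xL xR u r) u" "finite (outn (swp ?E xL xR u r) u)"
      by (simp add: outn_def, simp add: fin_outn)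
    then have "outdeg ?T u \<noteq> 0" by (auto simp: outdeg_outn)
    then have "x \<noteq> u" using x by (auto simp: leaves_def is_leaf_def)
    then show "lbl N' ((id(u := w)) x) = lbl ?T x" unfolding tm(2) by simp
  qed
  have steps: "\<exists>k \<le> 4. (head_step X ^^ k) N ?T"
  proof (cases "xL = xR")
    case True
    have "swp ?E xL xR u r = ?E" using True e1 by (auto simp: swp_def)
    then have "?T = N" by (cases N) simp
    then show ?thesis by (intro exI[of _ 0]) auto
  next
    case False
    have xLr: "(xL,r) \<notin> ?E" using ir' n1 False by auto
    have PT: "phylo_net X ?T" by (rule swap_phylo[OF P iu e1(4) xLr False n1(2) AS])
    show ?thesis
    proof (cases "c = v")
      case True
      have "(head_step X ^^ 4) N ?T"
        by (rule L4[OF P ir iu ou orr[unfolded True] False assms(9)[symmetric] assms(7) PT])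
      then show ?thesis by blast
    next
      case cv: False
      have "(head_step X ^^ 2) N ?T"
        by (rule GL[OF P ir iu ou orr False assms(9)[symmetric] cv assms(7) PT])
      then show ?thesis by (intro exI[of _ 2]) auto
    qed
  qed
  then show ?thesis using iso by blast
qed


end
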